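(* The point spectrum of $\dot I_{\mathrm{A}_{\frac12\infty}}$ on $\overline H_{\mathrm{A}_{\frac12\infty},\mathbb{C}}$ is empty, and the point spectrum of $\dot I_{\mathrm{D}_{\frac12\infty}}$ on $\overline H_{\mathrm{D}_{\frac12\infty},\mathbb{C}}$ consists of the single eigenvalue $2$, with multiplicity $1$. In particular, for both $W$, $\ker(\dot I_W)\cap\overline H_{W,\mathbb{C}}=\{0\}$.
   Context: Index sets: $C_{W,0}=\{c_0^{(n)}:n\ge1\}$ (type $\mathrm{A}_{\frac12\infty}$) or $\{c_0^{(n)}:n\ge1\}\cup\{c_0^+,c_0^-\}$ (type $\mathrm{D}_{\frac12\infty}$); $C_{W,1}=\{c_1^{(n)}:n\ge1\}$; $C_W=C_{W,0}\sqcup C_{W,1}$. Adjacency: $c_0^{(n)}$ adjacent to $c_1^{(n)}$ and $c_1^{(n+1)}$; in type D, $c_0^\pm$ adjacent to $c_1^{(1)}$; no others. $\overline H_{W,\mathbb{C}}=\ell^2(C_W)$ with orthonormal basis $\{\gamma_c\}$. $\dot I_W$ is the bounded self-adjoint operator with matrix $\langle\dot I_W\gamma_c,\gamma_{c'}\rangle=2$ if $c=c'$, $-1$ if $c,c'$ adjacent, $0$ otherwise. *)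

theory Defs
  imports "HOL-Analysis.Analysis"
begin

datatype dtype = A_half | D_half

text \<open>Vertices: C0 n = c_0^(n), C1 n = c_1^(n), C0p = c_0^+, C0m = c_0^-.\<close>
datatype node = C0 nat | C1 nat | C0p | C0m

definition CW0 :: "dtype \<Rightarrow> node set" where
  "CW0 W = {C0 n | n. n \<ge> 1} \<union> (if W = D_half then {C0p, C0m} else {})"

definition CW1 :: "dtype \<Rightarrow> node set" where
  "CW1 W = {C1 n | n. n \<ge> 1}"

definition CW :: "dtype \<Rightarrow> node set" where
  "CW W = CW0 W \<union> CW1 W"

definition adj0 :: "dtype \<Rightarrow> node \<Rightarrow> node \<Rightarrow> bool" where
  "adj0 W c c' \<longleftrightarrow>
     (\<exists>n\<ge>1. c = C0 n \<and> (c' = C1 n \<or> c' = C1 (n + 1)))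
   \<or> (W = D_half \<and> (c = C0p \<or> c = C0m) \<and> c' = C1 1)"

definition adj :: "dtype \<Rightarrow> node \<Rightarrow> node \<Rightarrow> bool" where
  "adj W c c' \<longleftrightarrow> c \<in> CW W \<and> c' \<in> CW W \<and> (adj0 W c c' \<or> adj0 W c' c)"

definition Imat :: "dtype \<Rightarrow> node \<Rightarrow> node \<Rightarrow> complex" where
  "Imat W c c' = (if c \<in> CW W \<and> c' \<in> CW W then
      (if c = c' then 2 else if adj W c c' then -1 else 0) else 0)"

definition l2 :: "dtype \<Rightarrow> (node \<Rightarrow> complex) \<Rightarrow> bool" where
  "l2 W f \<longleftrightarrow> (\<forall>c. c \<notin> CW W \<longrightarrow> f c = 0) \<and> (\<lambda>c. (cmod (f c))\<^sup>2) summable_on CW W"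

definition Iop :: "dtype \<Rightarrow> (node \<Rightarrow> complex) \<Rightarrow> node \<Rightarrow> complex" where
  "Iop W f c' = (\<Sum>\<^sub>\<infinity>c\<in>CW W. Imat W c c' * f c)"

definition eigenspace :: "dtype \<Rightarrow> complex \<Rightarrow> (node \<Rightarrow> complex) set" where
  "eigenspace W \<mu> = {f. l2 W f \<and> Iop W f = (\<lambda>c. \<mu> * f c)}"

definition point_spectrum :: "dtype \<Rightarrow> complex set" where
  "point_spectrum W = {\<mu>. \<exists>f\<in>eigenspace W \<mu>. f \<noteq> (\<lambda>_. 0)}"

end

theory Submission
  imports Defs
begin

lemma Iop_fin:
  assumes "finite S" "S \<subseteq> CW W" "\<And>c. c \<in> CW W \<Longrightarrow> c \<notin> S \<Longrightarrow> Imat W c c' = 0"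
  shows "Iop W f c' = (\<Sum>c\<in>S. Imat W c c' * f c)"
proof -
  have "Iop W f c' = infsum (\<lambda>c. Imat W c c' * f c) S"
    unfolding Iop_def by (rule infsum_cong_neutral) (use assms in auto)
  then show ?thesis using assms(1) by simp
qed

lemma Iop_out: "c' \<notin> CW W \<Longrightarrow> Iop W f c' = 0"
  unfolding Iop_def Imat_def by simp

lemma mem_CW: "C0 n \<in> CW W \<longleftrightarrow> n \<ge> 1" "C1 n \<in> CW W \<longleftrightarrow> n \<ge> 1"
  "C0p \<in> CW W \<longleftrightarrow> W = D_half" "C0m \<in> CW W \<longleftrightarrow> W = D_half"
  by (auto simp: CW_def CW0_def CW1_def)

lemma Iop_C0:
  assumes "n \<ge> 1"
  shows "Iop W f (C0 n) = 2 * f (C0 n) - f (C1 n) - f (C1 (n+1))"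
proof -
  have "Iop W f (C0 n) = (\<Sum>c\<in>{C0 n, C1 n, C1 (n+1)}. Imat W c (C0 n) * f c)"
    apply (rule Iop_fin)
      apply (use assms in \<open>auto simp: mem_CW\<close>)
    apply (auto simp: Imat_def adj_def adj0_def)
    done
  also have "\<dots> = 2 * f (C0 n) - f (C1 n) - f (C1 (n+1))"
    using assms by (simp add: Imat_def adj_def adj0_def mem_CW)
  finally show ?thesis .
qed

lemma Iop_C1:
  assumes "n \<ge> 2"
  shows "Iop W f (C1 n) = 2 * f (C1 n) - f (C0 n) - f (C0 (n-1))"
proof -
  have "Iop W f (C1 n) = (\<Sum>c\<in>{C1 n, C0 n, C0 (n-1)}. Imat W c (C1 n) * f c)"
    apply (rule Iop_fin)
      apply (use assms in \<open>auto simp: mem_CW\<close>)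
    apply (auto simp: Imat_def adj_def adj0_def)
    done
  also have "\<dots> = 2 * f (C1 n) - f (C0 n) - f (C0 (n-1))"
    using assms by (simp add: Imat_def adj_def adj0_def mem_CW)
  finally show ?thesis .
qed

lemma Iop_C1_1A:
  shows "Iop A_half f (C1 1) = 2 * f (C1 1) - f (C0 1)"
proof -
  have "Iop A_half f (C1 1) = (\<Sum>c\<in>{C1 1, C0 1}. Imat A_half c (C1 1) * f c)"
    apply (rule Iop_fin)
      apply (auto simp: mem_CW)
    apply (auto simp: Imat_def adj_def adj0_def)
    done
  also have "\<dots> = 2 * f (C1 1) - f (C0 1)"
    by (simp add: Imat_def adj_def adj0_def mem_CW)
  finally show ?thesis .
qed

lemma Iop_C1_1D:
  shows "Iop D_half f (C1 1) = 2 * f (C1 1) - f (C0 1) - f C0p - f C0m"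
proof -
  have "Iop D_half f (C1 1) = (\<Sum>c\<in>{C1 1, C0 1, C0p, C0m}. Imat D_half c (C1 1) * f c)"
    apply (rule Iop_fin)
      apply (auto simp: mem_CW)
    apply (auto simp: Imat_def adj_def adj0_def)
    done
  also have "\<dots> = 2 * f (C1 1) - f (C0 1) - f C0p - f C0m"
    by (simp add: Imat_def adj_def adj0_def mem_CW)
  finally show ?thesis .
qed

lemma Iop_C0p:
  shows "Iop D_half f C0p = 2 * f C0p - f (C1 1)"
proof -
  have "Iop D_half f C0p = (\<Sum>c\<in>{C0p, C1 1}. Imat D_half c C0p * f c)"
    apply (rule Iop_fin)
      apply (auto simp: mem_CW)
    apply (auto simp: Imat_def adj_def adj0_def)
    done
  also have "\<dots> = 2 * f C0p - f (C1 1)"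
    by (simp add: Imat_def adj_def adj0_def mem_CW)
  finally show ?thesis .
qed

lemma Iop_C0m:
  shows "Iop D_half f C0m = 2 * f C0m - f (C1 1)"
proof -
  have "Iop D_half f C0m = (\<Sum>c\<in>{C0m, C1 1}. Imat D_half c C0m * f c)"
    apply (rule Iop_fin)
      apply (auto simp: mem_CW)
    apply (auto simp: Imat_def adj_def adj0_def)
    done
  also have "\<dots> = 2 * f C0m - f (C1 1)"
    by (simp add: Imat_def adj_def adj0_def mem_CW)
  finally show ?thesis .
qed


definition p :: "nat \<Rightarrow> node" where
  "p k = (if odd k then C1 ((k+1) div 2) else C0 (k div 2))"

lemma Iop_p:
  assumes "k \<ge> 2"
  shows "Iop W f (p k) = 2 * f (p k) - f (p (k-1)) - f (p (k+1))"
proof (cases "even k")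
  case True
  then obtain m where m: "k = 2*m" by blast
  with assms have "m \<ge> 1" by simp
  have "p k = C0 m" "p (k-1) = C1 m" "p (k+1) = C1 (m+1)"
    using m \<open>m\<ge>1\<close> by (auto simp: p_def)
  then show ?thesis using Iop_C0[OF \<open>m\<ge>1\<close>] by simp
next
  case False
  then obtain m where m: "k = 2*m+1" by (metis oddE)
  with assms have "m \<ge> 1" by simp
  have "p k = C1 (m+1)" "p (k-1) = C0 m" "p (k+1) = C0 (m+1)"
    using m \<open>m\<ge>1\<close> by (auto simp: p_def)
  then show ?thesis using Iop_C1[of "m+1"] \<open>m\<ge>1\<close> by simp
qed

lemma p_12: "p 1 = C1 1" "p 2 = C0 1" "p (Suc 0) = C1 1" by (auto simp: p_def)

lemma inj_p: "inj (\<lambda>k. p (Suc k))"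
  by (rule injI) (auto simp: p_def split: if_splits, presburger+)

lemma p_CW: "p (Suc k) \<in> CW W"
  by (auto simp: p_def mem_CW)

lemma CW_p: "c \<in> CW W \<Longrightarrow> c \<noteq> C0p \<Longrightarrow> c \<noteq> C0m \<Longrightarrow> \<exists>k. c = p (Suc k)"
proof (cases c)
  case (C0 n)
  assume "c \<in> CW W" then have "n \<ge> 1" using C0 by (simp add: mem_CW)
  then have "c = p (Suc (2*n - 1))" using C0 by (auto simp: p_def)
  then show ?thesis by blast
next
  case (C1 n)
  assume "c \<in> CW W" then have "n \<ge> 1" using C1 by (simp add: mem_CW)
  then have "c = p (Suc (2*n - 2))" using C1 by (auto simp: p_def)
  then show ?thesis by blast
qed auto

lemma l2_lim:
  assumes "l2 W f"
  shows "(\<lambda>k. f (p (Suc k))) \<longlonglongrightarrow> 0"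
proof -
  let ?g = "\<lambda>c. (cmod (f c))\<^sup>2"
  have "?g summable_on (\<lambda>k. p (Suc k)) ` UNIV"
    using assms unfolding l2_def by (auto intro: summable_on_subset p_CW)
  then have "(?g \<circ> (\<lambda>k. p (Suc k))) summable_on UNIV"
    using summable_on_reindex[OF inj_p] by blast
  then have "summable (\<lambda>k. (cmod (f (p (Suc k))))\<^sup>2)"
    by (subst (asm) summable_on_UNIV_nonneg_real_iff) (auto simp: o_def)
  then have "(\<lambda>k. (cmod (f (p (Suc k))))\<^sup>2) \<longlonglongrightarrow> 0"
    by (rule summable_LIMSEQ_zero)
  then have "(\<lambda>k. sqrt ((cmod (f (p (Suc k))))\<^sup>2)) \<longlonglongrightarrow> sqrt 0"
    by (rule tendsto_real_sqrt)
  then have "(\<lambda>k. norm (f (p (Suc k)))) \<longlonglongrightarrow> 0" by simp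
  then show ?thesis by (simp add: tendsto_norm_zero_iff)
qed

definition Q :: "complex \<Rightarrow> complex \<Rightarrow> complex \<Rightarrow> complex" where
  "Q t x y = x^2 - t*x*y + y^2"

lemma chain_Q:
  fixes b :: "nat \<Rightarrow> complex"
  assumes "\<And>k. b (Suc (Suc k)) = t * b (Suc k) - b k"
  shows "Q t (b k) (b (Suc k)) = Q t (b 0) (b 1)"
proof (induction k)
  case (Suc k)
  have "Q t (b (Suc k)) (b (Suc (Suc k))) = Q t (b k) (b (Suc k))"
    unfolding assms Q_def by (simp add: algebra_simps power2_eq_square)
  then show ?case using Suc by simp
qed simp

lemma chain_lim:
  fixes b :: "nat \<Rightarrow> complex"
  assumes "\<And>k. b (Suc (Suc k)) = t * b (Suc k) - b k" "(\<lambda>k. b (Suc k)) \<longlonglongrightarrow> 0"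
  shows "Q t (b 0) (b 1) = 0"
proof -
  have b0: "b \<longlonglongrightarrow> 0" using assms(2) by (rule LIMSEQ_imp_Suc)
  have "(\<lambda>k. Q t (b k) (b (Suc k))) \<longlonglongrightarrow> Q t 0 0"
    unfolding Q_def by (intro tendsto_intros b0 assms(2))
  moreover have "(\<lambda>k. Q t (b k) (b (Suc k))) = (\<lambda>k. Q t (b 0) (b 1))"
    by (rule ext, rule chain_Q, rule assms(1))
  ultimately have "(\<lambda>k. Q t (b 0) (b 1)) \<longlonglongrightarrow> 0" by (simp add: Q_def)
  then show ?thesis using LIMSEQ_const_iff by blast
qed

lemma chain_zero:
  fixes b :: "nat \<Rightarrow> complex"
  assumes "\<And>k. b (Suc (Suc k)) = t * b (Suc k) - b k" "b 0 = 0" "b 1 = 0"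
  shows "b k = 0"
proof -
  have "b k = 0 \<and> b (Suc k) = 0"
  proof (induction k)
    case (Suc k)
    then show ?case using assms(1)[of k] by simp
  qed (use assms in simp)
  then show ?thesis by simp
qed


lemma eigA:
  assumes "l2 A_half f" "Iop A_half f = (\<lambda>c. \<mu> * f c)"
  shows "f = (\<lambda>_. 0)"
proof -
  define t where "t = 2 - \<mu>"
  define b where "b k = (if k = 0 then 0 else f (p k))" for k
  have E: "\<And>c. Iop A_half f c = \<mu> * f c" using assms(2) by metis
  have rec: "b (Suc (Suc k)) = t * b (Suc k) - b k" for k
  proof (cases "k = 0")
    case True
    have "2 * f (C1 1) - f (C0 1) = \<mu> * f (C1 1)" using E[of "C1 1"] Iop_C1_1A by simp
    then show ?thesis using True by (simp add: b_def t_def p_12 numeral_2_eq_2[symmetric] algebra_simps)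
  next
    case False
    have "2 * f (p (Suc k)) - f (p k) - f (p (Suc (Suc k))) = \<mu> * f (p (Suc k))"
      using E[of "p (Suc k)"] Iop_p[of "Suc k" A_half f] False by simp
    then show ?thesis using False by (simp add: b_def t_def algebra_simps)
  qed
  have lim: "(\<lambda>k. b (Suc k)) \<longlonglongrightarrow> 0" using l2_lim[OF assms(1)] by (simp add: b_def)
  have "Q t (b 0) (b 1) = 0" by (rule chain_lim[OF rec lim])
  then have "b 1 = 0" by (simp add: Q_def b_def)
  moreover have "b 0 = 0" by (simp add: b_def)
  ultimately have Z: "b k = 0" for k by (metis chain_zero[of b t, OF rec])
  show ?thesis
  proof
    fix c
    show "f c = 0"
    proof (cases "c \<in> CW A_half")
      case True
      have "c \<noteq> C0p" "c \<noteq> C0m" using True mem_CW(3,4)[of A_half] by auto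
      then obtain k where "c = p (Suc k)" using CW_p[OF True] by auto
      then show ?thesis using Z[of "Suc k"] by (simp add: b_def)
    next
      case False then show ?thesis using assms(1) by (simp add: l2_def)
    qed
  qed
qed

definition f0 :: "node \<Rightarrow> complex" where
  "f0 c = (if c = C0p then 1 else if c = C0m then -1 else 0)"

lemma eigD:
  assumes "l2 D_half f" "Iop D_half f = (\<lambda>c. \<mu> * f c)"
  shows "f = (\<lambda>_. 0) \<or> (\<mu> = 2 \<and> f = (\<lambda>c. f C0p * f0 c))"
proof -
  define t where "t = 2 - \<mu>"
  define b where "b k = (if k = 0 then f C0p + f C0m else f (p k))" for k
  have E: "\<And>c. Iop D_half f c = \<mu> * f c" using assms(2) by metis
  have Ep: "t * f C0p = f (C1 1)" using E[of C0p] Iop_C0p[of f] by (simp add: t_def algebra_simps)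
  have Em: "t * f C0m = f (C1 1)" using E[of C0m] Iop_C0m[of f] by (simp add: t_def algebra_simps)
  have rec: "b (Suc (Suc k)) = t * b (Suc k) - b k" for k
  proof (cases "k = 0")
    case True
    have "2 * f (C1 1) - f (C0 1) - f C0p - f C0m = \<mu> * f (C1 1)" using E[of "C1 1"] Iop_C1_1D by simp
    then show ?thesis using True by (simp add: b_def t_def p_12 numeral_2_eq_2[symmetric] algebra_simps)
  next
    case False
    have "2 * f (p (Suc k)) - f (p k) - f (p (Suc (Suc k))) = \<mu> * f (p (Suc k))"
      using E[of "p (Suc k)"] Iop_p[of "Suc k" D_half f] False by simp
    then show ?thesis using False by (simp add: b_def t_def algebra_simps)
  qed
  have lim: "(\<lambda>k. b (Suc k)) \<longlonglongrightarrow> 0" using l2_lim[OF assms(1)] by (simp add: b_def)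
  have Q0: "Q t (b 0) (b 1) = 0" by (rule chain_lim[OF rec lim])
  have tb: "t * b 0 = 2 * b 1" using Ep Em by (simp add: b_def p_12 algebra_simps)
  have f_from: "f c = 0" if h1: "c \<in> CW D_half" and h2: "c \<noteq> C0p" and h3: "c \<noteq> C0m" and h4: "\<And>k. b k = 0" for c
  proof -
    obtain k where "c = p (Suc k)" using CW_p[OF h1 h2 h3] by auto
    then show ?thesis using h4[of "Suc k"] by (simp add: b_def)
  qed
  have out: "f c = 0" if "c \<notin> CW D_half" for c using assms(1) that by (simp add: l2_def)
  show ?thesis
  proof (cases "t = 0")
    case True
    then have "b 1 = 0" using tb by simp
    with Q0 True have "b 0 = 0" by (simp add: Q_def)
    then have Z: "b k = 0" for k using \<open>b 1 = 0\<close> by (metis chain_zero[of b t, OF rec])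
    have fm: "f C0m = - f C0p" using Z[of 0] by (simp add: b_def add_eq_0_iff)
    have "f = (\<lambda>c. f C0p * f0 c)"
    proof
      fix c
      show "f c = f C0p * f0 c"
        using f_from[OF _ _ _ Z, of c] out[of c] fm by (cases "c \<in> CW D_half") (auto simp: f0_def mem_CW)
    qed
    moreover have "\<mu> = 2" using True by (simp add: t_def)
    ultimately show ?thesis by simp
  next
    case False
    have b1: "b 1 = t / 2 * b 0" using tb by (simp add: field_simps)
    have "b 0 ^ 2 * (1 - t^2 / 4) = 0" using Q0 unfolding Q_def b1 by (simp add: field_simps power2_eq_square)
    then consider "b 0 = 0" | "t^2 = 4" by (auto simp: field_simps)
    then show ?thesis
    proof cases
      case 1
      then have "b 1 = 0" using b1 by simp
      then have Z: "b k = 0" for k using 1 by (metis chain_zero[of b t, OF rec])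
      have "f C0p = 0" "f C0m = 0" using Ep Em Z[of 1] False by (simp_all add: b_def p_12)
      then have "f = (\<lambda>_. 0)"
        using f_from[OF _ _ _ Z] out by (metis)
      then show ?thesis by simp
    next
      case 2
      have tt: "(t/2) * (t/2) = 1" using 2 by (simp add: power2_eq_square field_simps)
      have R: "b (Suc k) = t / 2 * b k" for k
      proof (induction k)
        case 0 then show ?case using b1 by simp
      next
        case (Suc k)
        have "b k = (t/2) * (t/2) * b k" using tt by simp
        also have "\<dots> = t/2 * b (Suc k)" using Suc by simp
        finally have "b k = t/2 * b (Suc k)" .
        have "b (Suc (Suc k)) = t * b (Suc k) - t/2 * b (Suc k)" using rec[of k] \<open>b k = t/2 * b (Suc k)\<close> by simp
        also have "\<dots> = t/2 * b (Suc k)" by (simp add: field_simps)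
        finally show ?case .
      qed
      have nt: "cmod (t/2) = 1"
      proof -
        have "cmod (t/2) * cmod (t/2) = 1" using tt by (metis norm_mult norm_one)
        then show ?thesis by (metis abs_of_nonneg norm_ge_zero abs_square_eq_1 power2_eq_square)
      qed
      have C: "cmod (b k) = cmod (b 0)" for k
      proof (induction k)
        case (Suc k)
        have "cmod (b (Suc k)) = cmod (t/2) * cmod (b k)" unfolding R by (rule norm_mult)
        then show ?case using Suc nt by simp
      qed simp
      have "(\<lambda>k. cmod (b (Suc k))) \<longlonglongrightarrow> 0" using lim by (simp add: tendsto_norm_zero_iff)
      moreover have "(\<lambda>k. cmod (b (Suc k))) = (\<lambda>k. cmod (b 0))" by (rule ext) (rule C)
      ultimately have "(\<lambda>k. cmod (b 0)) \<longlonglongrightarrow> 0" by simp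
      then have "cmod (b 0) = 0" by (simp add: LIMSEQ_const_iff)
      then have "b 0 = 0" by simp
      then have "b 1 = 0" using b1 by simp
      then have Z: "b k = 0" for k using \<open>b 0 = 0\<close> by (metis chain_zero[of b t, OF rec])
      have "f C0p = 0" "f C0m = 0" using Ep Em Z[of 1] False by (simp_all add: b_def p_12)
      then have "f = (\<lambda>_. 0)"
        using f_from[OF _ _ _ Z] out by (metis)
      then show ?thesis by simp
    qed
  qed
qed

lemma l2_f0: "l2 D_half (\<lambda>c. a * f0 c)"
proof -
  have "(\<lambda>c. (cmod (a * f0 c))\<^sup>2) summable_on CW D_half \<longleftrightarrow> (\<lambda>c. (cmod (a * f0 c))\<^sup>2) summable_on {C0p, C0m}"
    by (rule summable_on_cong_neutral) (auto simp: f0_def mem_CW)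
  moreover have "(\<lambda>c. (cmod (a * f0 c))\<^sup>2) summable_on {C0p, C0m}" by simp
  moreover have "C0p \<in> CW D_half" "C0m \<in> CW D_half" by (simp_all add: mem_CW)
  moreover have "\<forall>c. c \<notin> CW D_half \<longrightarrow> a * f0 c = 0" using calculation(3,4) by (auto simp: f0_def)
  ultimately show ?thesis unfolding l2_def by blast
qed

lemma Iop_f0: "Iop D_half (\<lambda>c. a * f0 c) = (\<lambda>c. 2 * (a * f0 c))"
proof
  fix c
  show "Iop D_half (\<lambda>c. a * f0 c) c = 2 * (a * f0 c)"
  proof (cases c)
    case (C0 n)
    then show ?thesis by (cases "n = 0") (auto simp: Iop_out mem_CW Iop_C0 f0_def)
  next
    case (C1 n)
    then consider "n = 0" | "n = 1" | "n \<ge> 2" by linarith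
    then show ?thesis
    proof cases
      case 2
      show ?thesis unfolding C1 2 Iop_C1_1D by (simp add: f0_def)
    qed (auto simp: C1 Iop_out mem_CW Iop_C1 f0_def)
  qed (auto simp: Iop_C0p Iop_C0m f0_def)
qed


lemma kernel: "{f. l2 W f \<and> Iop W f = (\<lambda>_. 0)} = {(\<lambda>_. 0)}"
proof
  show "{f. l2 W f \<and> Iop W f = (\<lambda>_. 0)} \<subseteq> {(\<lambda>_. 0)}"
  proof
    fix f assume "f \<in> {f. l2 W f \<and> Iop W f = (\<lambda>_. 0)}"
    then have h: "l2 W f" "Iop W f = (\<lambda>c. 0 * f c)" by auto
    show "f \<in> {(\<lambda>_. 0)}"
    proof (cases W)
      case A_half then show ?thesis using eigA[of f 0] h by auto
    next
      case D_half then show ?thesis using eigD[of f 0] h by auto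
    qed
  qed
next
  have "l2 W (\<lambda>_. 0)" by (simp add: l2_def)
  moreover have "Iop W (\<lambda>_. 0) = (\<lambda>_. 0)" by (rule ext) (simp add: Iop_def)
  ultimately show "{(\<lambda>_. 0)} \<subseteq> {f. l2 W f \<and> Iop W f = (\<lambda>_. 0)}" by auto
qed

theorem mainTheorem10:
  shows "point_spectrum A_half = {}
       \<and> point_spectrum D_half = {2}
       \<and> (\<exists>f0. f0 \<noteq> (\<lambda>_. 0) \<and> eigenspace D_half 2 = {(\<lambda>c. a * f0 c) | a. True})
       \<and> (\<forall>W. {f. l2 W f \<and> Iop W f = (\<lambda>_. 0)} = {(\<lambda>_. 0)})"
proof (intro conjI allI kernel)
  show "point_spectrum A_half = {}" using eigA by (auto simp: point_spectrum_def eigenspace_def)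
  have nz: "(\<lambda>c. 1 * f0 c) \<noteq> (\<lambda>_. 0)" by (metis f0_def mult_1 one_neq_zero)
  have mem: "(\<lambda>c. a * f0 c) \<in> eigenspace D_half 2" for a
    using l2_f0 Iop_f0 by (simp add: eigenspace_def)
  show "point_spectrum D_half = {2}"
  proof
    show "point_spectrum D_half \<subseteq> {2}"
      using eigD by (auto simp: point_spectrum_def eigenspace_def)
    show "{2} \<subseteq> point_spectrum D_half"
      using mem[of 1] nz by (auto simp: point_spectrum_def)
  qed
  have "eigenspace D_half 2 = {(\<lambda>c. a * f0 c) | a. True}"
  proof
    show "eigenspace D_half 2 \<subseteq> {(\<lambda>c. a * f0 c) | a. True}"
    proof
      fix f assume "f \<in> eigenspace D_half 2"
      then have "f = (\<lambda>_. 0) \<or> f = (\<lambda>c. f C0p * f0 c)" using eigD[of f 2] by (auto simp: eigenspace_def)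
      then show "f \<in> {(\<lambda>c. a * f0 c) | a. True}"
      proof
        assume "f = (\<lambda>_. 0)" then have "f = (\<lambda>c. 0 * f0 c)" by simp
        then show ?thesis by blast
      qed blast
    qed
    show "{(\<lambda>c. a * f0 c) | a. True} \<subseteq> eigenspace D_half 2" using mem by blast
  qed
  moreover have "f0 \<noteq> (\<lambda>_. 0)" using nz by simp
  ultimately show "\<exists>f0. f0 \<noteq> (\<lambda>_. 0) \<and> eigenspace D_half 2 = {(\<lambda>c. a * f0 c) | a. True}" by blast
qed

end
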